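(* Let $f\in\mathbb{Q}^n\setminus\mathbb{Z}^n$ and $\alpha>1$. Then: (a) There exists a maximal lattice-free simplex $L\in\mathcal{L}_{n+1}^n$ with $f\in\operatorname{int}(L)$ such that, for some choice of integer points $z_1,\dots,z_{n+1}$ lying in the relative interiors of the $n+1$ distinct facets of $L$ (one in each), for all $i,j\in[n+1]$ with $i\ne j$ the segment $[z_i,z_j]$ intersects $L_\alpha=\frac1\alpha L+\left(1-\frac1\alpha\right)f$. (b) For every simplex $L$ as in (a), one has $\rho_f(B,L)\ge\alpha$ for every $B\in\mathcal{L}_n^n$.
   Context: A set $B\subseteq\mathbb{R}^n$ is lattice-free if it is an $n$-dimensional closed convex set with $\operatorname{int}(B)\cap\mathbb{Z}^n=\emptyset$; maximal lattice-free if not a proper subset of another lattice-free set. $\mathcal{L}_i^n$ is the family of lattice-free polyhedra in $\mathbb{R}^n$ with at most $i$ facets. For $B$ closed convex with $0\in\operatorname{int}(B)$, $\psi_B(r)=\inf\{\lambda>0:r\in\lambda B\}$. For $k\in\mathbb{N}$, $R=(r_1,\dots,r_k)\in\mathbb{R}^{n\times k}$ and an $n$-dimensional closed convex $B$: if $f\in\operatorname{int}(B)$, $C_B(R,f)=\{s\in\mathbb{R}^k_{\ge0}:\sum_j s_j\psi_{B-f}(r_j)\ge1\}$, otherwise $C_B(R,f)=\mathbb{R}^k_{\ge0}$. $\rho_f(B,L)=\inf\{\alpha'>0:C_B(R,f)\subseteq\frac1{\alpha'}C_L(R,f)$ for all $k$ and all $R\in\mathbb{R}^{n\times k}\}$.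 *)

theory Defs
  imports "HOL-Analysis.Analysis"
begin

definition lattice_pt :: "real^'n \<Rightarrow> bool" where
  "lattice_pt x \<longleftrightarrow> (\<forall>i. x $ i \<in> \<int>)"

definition lattice_free :: "(real^'n) set \<Rightarrow> bool" where
  "lattice_free B \<longleftrightarrow> closed B \<and> convex B \<and> aff_dim B = int CARD('n)
     \<and> (\<forall>x\<in>interior B. \<not> lattice_pt x)"

definition max_lattice_free :: "(real^'n) set \<Rightarrow> bool" where
  "max_lattice_free B \<longleftrightarrow> lattice_free B \<and> (\<forall>B'. lattice_free B' \<and> B \<subseteq> B' \<longrightarrow> B' = B)"

definition LF_poly :: "nat \<Rightarrow> (real^'n) set set" where
  "LF_poly i = {B. lattice_free B \<and> polyhedron B \<and> finite {F. F facet_of B}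
                  \<and> card {F. F facet_of B} \<le> i}"

definition gauge :: "(real^'n) set \<Rightarrow> real^'n \<Rightarrow> real" where
  "gauge B r = Inf {t. t > 0 \<and> r \<in> (\<lambda>x. t *\<^sub>R x) ` B}"

text \<open>C_B(R,f) for R = (r_0,...,r_{k-1}); points s of R^k_{>=0} are represented as
  functions nat => real vanishing outside {..<k}.\<close>
definition Ccone :: "(real^'n) set \<Rightarrow> nat \<Rightarrow> (nat \<Rightarrow> real^'n) \<Rightarrow> real^'n \<Rightarrow> (nat \<Rightarrow> real) set" where
  "Ccone B k r f = {s. (\<forall>j\<ge>k. s j = 0) \<and> (\<forall>j<k. s j \<ge> 0) \<and>
      (f \<in> interior B \<longrightarrow> (\<Sum>j<k. s j * gauge ((\<lambda>x. x - f) ` B) (r j)) \<ge> 1)}"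

definition scale_set :: "real \<Rightarrow> (nat \<Rightarrow> real) set \<Rightarrow> (nat \<Rightarrow> real) set" where
  "scale_set c C = (\<lambda>s. (\<lambda>j. c * s j)) ` C"

text \<open>rho_f(B,L), with value +infinity when no alpha' works.\<close>
definition rho :: "real^'n \<Rightarrow> (real^'n) set \<Rightarrow> (real^'n) set \<Rightarrow> ereal" where
  "rho f B L = Inf (ereal ` {\<alpha>'. \<alpha>' > 0 \<and>
      (\<forall>k r. Ccone B k r f \<subseteq> scale_set (1 / \<alpha>') (Ccone L k r f))})"

definition shrink :: "real \<Rightarrow> real^'n \<Rightarrow> (real^'n) set \<Rightarrow> (real^'n) set" where
  "shrink \<alpha> f L = (\<lambda>x. (1/\<alpha>) *\<^sub>R x + (1 - 1/\<alpha>) *\<^sub>R f) ` L"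

text \<open>The property of L in part (a); facets indexed by 0..n (n = CARD('n)).\<close>
definition good_simplex :: "real \<Rightarrow> real^'n \<Rightarrow> (real^'n) set \<Rightarrow> bool" where
  "good_simplex \<alpha> f L \<longleftrightarrow>
     int CARD('n) simplex L \<and> max_lattice_free L \<and> L \<in> LF_poly (CARD('n) + 1) \<and>
     f \<in> interior L \<and>
     (\<exists>F z. bij_betw F {..CARD('n)} {G. G facet_of L} \<and>
        (\<forall>i\<le>CARD('n). lattice_pt (z i) \<and> z i \<in> rel_interior (F i)) \<and>
        (\<forall>i\<le>CARD('n). \<forall>j\<le>CARD('n). i \<noteq> j \<longrightarrow>
            closed_segment (z i) (z j) \<inter> shrink \<alpha> f L \<noteq> {}))"

end

theory Submission
  imports Defs
begin


lemma mem_scaled_shift: "r \<in> (\<lambda>x. t *\<^sub>R x) ` ((\<lambda>x. x - f) ` B) \<longleftrightarrow> (\<exists>b\<in>B. r = t *\<^sub>R (b - f))"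
  by auto

lemma gauge_set_props:
  fixes B :: "(real^'n) set"
  assumes "f \<in> interior B"
  shows "{t. t > 0 \<and> r \<in> (\<lambda>x. t *\<^sub>R x) ` ((\<lambda>x. x - f) ` B)} \<noteq> {}"
    and "bdd_below {t. t > 0 \<and> r \<in> (\<lambda>x. t *\<^sub>R x) ` ((\<lambda>x. x - f) ` B)}"
    and "gauge B' r' = Inf {t. t > 0 \<and> r' \<in> (\<lambda>x. t *\<^sub>R x) ` B'}"
proof -
  obtain e where e: "e > 0" "ball f e \<subseteq> B" using assms by (meson mem_interior)
  define t where "t = 2 * norm r / e + 1"
  have "2 * norm r / e \<ge> 0" using e by simp
  then have t: "t > 0" by (simp add: t_def)
  have "norm r / t < e"
  proof -
    have "norm r < e * t" using e by (simp add: t_def field_simps add_pos_nonneg)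
    then show ?thesis using t by (simp add: field_simps)
  qed
  then have "f + (1/t) *\<^sub>R r \<in> B" using e t by (intro subsetD[OF e(2)]) (simp add: dist_norm)
  moreover have "r = t *\<^sub>R ((f + (1/t) *\<^sub>R r) - f)" using t by simp
  ultimately show "{t. t > 0 \<and> r \<in> (\<lambda>x. t *\<^sub>R x) ` ((\<lambda>x. x - f) ` B)} \<noteq> {}"
    using t by (auto simp only: mem_scaled_shift)
  show "bdd_below {t. t > 0 \<and> r \<in> (\<lambda>x. t *\<^sub>R x) ` ((\<lambda>x. x - f) ` B)}"
    by (rule bdd_belowI[of _ 0]) auto
  show "gauge B' r' = Inf {t. t > 0 \<and> r' \<in> (\<lambda>x. t *\<^sub>R x) ` B'}" by (simp add: gauge_def)
qed

lemma seg_lin_ge: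
  fixes a :: "real^'n"
  assumes "p \<in> closed_segment x y" "a \<bullet> x \<ge> b" "a \<bullet> y \<ge> b"
  shows "a \<bullet> p \<ge> b"
proof -
  obtain u where u: "0 \<le> u" "u \<le> 1" "p = (1 - u) *\<^sub>R x + u *\<^sub>R y"
    using assms(1) by (auto simp: closed_segment_def)
  have "a \<bullet> p = (1 - u) * (a \<bullet> x) + u * (a \<bullet> y)" using u by (simp add: inner_add_right)
  also have "\<dots> \<ge> (1 - u) * b + u * b"
    using u assms by (intro add_mono mult_left_mono) auto
  finally show ?thesis by (simp add: algebra_simps)
qed

lemma facet_witness:
  fixes B :: "(real^'n) set"
  assumes pB: "polyhedron B" and fB: "f \<in> interior B" and zB: "z \<notin> interior B"
    and intB: "interior B = B - \<Union>{G. G facet_of B}"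
    and abG: "\<And>G. G facet_of B \<Longrightarrow> B \<subseteq> {x. fst (ab G) \<bullet> x \<le> snd (ab G)} \<and> G = B \<inter> {x. fst (ab G) \<bullet> x = snd (ab G)}"
  shows "\<exists>G. G facet_of B \<and> fst (ab G) \<bullet> z \<ge> snd (ab G)"
proof -
  have "closed_segment f z \<inter> frontier (interior B) \<noteq> {}"
  proof (rule connected_Int_frontier)
    show "connected (closed_segment f z)" by (rule connected_segment)
    show "closed_segment f z \<inter> interior B \<noteq> {}" using fB ends_in_segment(1)[of f z] by blast
    show "closed_segment f z - interior B \<noteq> {}" using zB ends_in_segment(2)[of z f] by blast
  qed
  then obtain w where w: "w \<in> closed_segment f z" "w \<in> frontier (interior B)" by blast
  have "w \<in> frontier B" using w(2) frontier_interior_subset by blast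
  then have "w \<in> B" "w \<notin> interior B" using pB polyhedron_imp_closed closure_closed
    unfolding frontier_def by fastforce+
  then obtain G where G: "G facet_of B" "w \<in> G" using intB by blast
  define a where "a = fst (ab G)"
  define b where "b = snd (ab G)"
  have hs: "B \<subseteq> {x. a \<bullet> x \<le> b}" and Geq: "G = B \<inter> {x. a \<bullet> x = b}" using abG[OF G(1)] by (auto simp: a_def b_def)
  have aw: "a \<bullet> w = b" using G Geq by auto
  have af: "a \<bullet> f < b"
  proof -
    have "f \<in> B" "f \<notin> G" using fB intB G(1) by auto
    then show ?thesis using hs Geq by fastforce
  qed
  obtain u where u: "0 \<le> u" "u \<le> 1" "w = (1 - u) *\<^sub>R f + u *\<^sub>R z"
    using w(1) by (auto simp: closed_segment_def)
  have "a \<bullet> w = (1 - u) * (a \<bullet> f) + u * (a \<bullet> z)" using u by (simp add: inner_add_right)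
  then have beq: "b = (1 - u) * (a \<bullet> f) + u * (a \<bullet> z)" using aw by simp
  have "a \<bullet> z \<ge> b"
  proof (rule ccontr)
    assume "\<not> a \<bullet> z \<ge> b"
    then have az: "a \<bullet> z < b" by simp
    have "(1 - u) * (a \<bullet> f) \<le> (1 - u) * b" using af u by (intro mult_left_mono) auto
    moreover have "u * (a \<bullet> z) \<le> u * b" using az u by (intro mult_left_mono) auto
    moreover have "(1 - u) * (a \<bullet> f) < (1 - u) * b \<or> u * (a \<bullet> z) < u * b"
      using af az u by (cases "u = 1") auto
    ultimately have "(1 - u) * (a \<bullet> f) + u * (a \<bullet> z) < (1 - u) * b + u * b" by linarith
    then show False using beq by (simp add: algebra_simps)
  qed
  then show ?thesis using G(1) by (auto simp: a_def b_def)
qed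

lemma partB:
  fixes f :: "real^'n" and L B :: "(real^'n) set"
  assumes a1: "\<alpha> > 1" and gs: "good_simplex \<alpha> f L" and BL: "B \<in> LF_poly CARD('n)"
  shows "rho f B L \<ge> ereal \<alpha>"
proof -
  from gs have fL: "f \<in> interior L" unfolding good_simplex_def by blast
  from gs obtain F z where
      zl: "\<forall>i\<le>CARD('n). lattice_pt (z i) \<and> z i \<in> rel_interior (F i)"
    and seg: "\<forall>i\<le>CARD('n). \<forall>j\<le>CARD('n). i \<noteq> j \<longrightarrow> closed_segment (z i) (z j) \<inter> shrink \<alpha> f L \<noteq> {}"
    unfolding good_simplex_def by blast
  from BL have lfB: "lattice_free B" and pB: "polyhedron B" and finF: "finite {G. G facet_of B}"
    and cardF: "card {G. G facet_of B} \<le> CARD('n)"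
    unfolding LF_poly_def by auto
  have affB: "aff_dim B = int CARD('n)" using lfB unfolding lattice_free_def by auto
  have intB: "interior B = B - \<Union>{G. G facet_of B}"
    using rel_interior_of_polyhedron[OF pB] interior_rel_interior[of B] affB by simp
  define ab where "ab G = (SOME p. fst p \<noteq> 0 \<and> B \<subseteq> {x. fst p \<bullet> x \<le> snd p} \<and> G = B \<inter> {x. fst p \<bullet> x = snd p})" for G
  have abG: "B \<subseteq> {x. fst (ab G) \<bullet> x \<le> snd (ab G)} \<and> G = B \<inter> {x. fst (ab G) \<bullet> x = snd (ab G)}"
    if GB: "G facet_of B" for G
  proof -
    obtain a b where "a \<noteq> 0" "B \<subseteq> {x. a \<bullet> x \<le> b}" "G = B \<inter> {x. a \<bullet> x = b}"
      using facet_of_polyhedron[OF pB GB] by blast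
    then have "\<exists>p. fst p \<noteq> 0 \<and> B \<subseteq> {x. fst p \<bullet> x \<le> snd p} \<and> G = B \<inter> {x. fst p \<bullet> x = snd p}"
      by (intro exI[of _ "(a,b)"]) auto
    from someI_ex[OF this] show ?thesis unfolding ab_def by blast
  qed
  have key: "\<alpha> \<le> \<alpha>'" if ap: "\<alpha>' > 0" and cont: "\<forall>k r. Ccone B k r f \<subseteq> scale_set (1/\<alpha>') (Ccone L k r f)" for \<alpha>'
  proof (rule ccontr)
    assume "\<not> \<alpha> \<le> \<alpha>'"
    then have lt: "\<alpha>' < \<alpha>" by simp
    have fB: "f \<in> interior B"
    proof (rule ccontr)
      assume nf: "f \<notin> interior B"
      have "(\<lambda>_. 0) \<in> Ccone B 0 (\<lambda>_. 0) f" using nf by (simp add: Ccone_def)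
      moreover have "Ccone L 0 (\<lambda>_. 0) f = {}" using fL by (simp add: Ccone_def)
      ultimately show False using cont[rule_format, of 0 "\<lambda>_. 0"] unfolding scale_set_def by blast
    qed
    have inB: "p \<in> interior B" if p: "p \<in> shrink \<alpha> f L" for p
    proof -
      define r where "r = p - f"
      define SB where "SB = {t. t > 0 \<and> r \<in> (\<lambda>x. t *\<^sub>R x) ` ((\<lambda>x. x - f) ` B)}"
      define SL where "SL = {t. t > 0 \<and> r \<in> (\<lambda>x. t *\<^sub>R x) ` ((\<lambda>x. x - f) ` L)}"
      have SBne: "SB \<noteq> {}" and SBbd: "bdd_below SB" using gauge_set_props(1,2)[OF fB, of r] unfolding SB_def by blast+
      have SLne: "SL \<noteq> {}" and SLbd: "bdd_below SL" using gauge_set_props(1,2)[OF fL, of r] unfolding SL_def by blast+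
      have gB: "gauge ((\<lambda>x. x - f) ` B) r = Inf SB" by (simp add: gauge_def SB_def)
      have gL: "gauge ((\<lambda>x. x - f) ` L) r = Inf SL" by (simp add: gauge_def SL_def)
      obtain q where q: "q \<in> L" "p = (1/\<alpha>) *\<^sub>R q + (1 - 1/\<alpha>) *\<^sub>R f"
        using p unfolding shrink_def by blast
      have "r = (1/\<alpha>) *\<^sub>R (q - f)" using q(2) by (simp add: r_def algebra_simps)
      then have "1/\<alpha> \<in> SL" using q(1) a1 unfolding SL_def mem_scaled_shift by auto
      then have SLle: "Inf SL \<le> 1/\<alpha>" using SLbd by (rule cInf_lower)
      have SB0: "Inf SB \<ge> 0" using SBne by (intro cInf_greatest) (auto simp: SB_def)
      have SL0: "Inf SL \<ge> 0" using SLne by (intro cInf_greatest) (auto simp: SL_def)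
      have "Inf SB < 1"
      proof (cases "Inf SB = 0")
        case True then show ?thesis by simp
      next
        case False
        then have pos: "Inf SB > 0" using SB0 by simp
        define s where "s = (\<lambda>j::nat. if j = 0 then 1 / Inf SB else 0)"
        have "s \<in> Ccone B 1 (\<lambda>_. r) f" unfolding Ccone_def s_def using fB gB pos by auto
        then obtain s' where s': "s' \<in> Ccone L 1 (\<lambda>_. r) f" "s = (\<lambda>j. (1/\<alpha>') * s' j)"
          using cont unfolding scale_set_def by blast
        have s'0: "s' 0 * Inf SL \<ge> 1" using s'(1) fL gL by (simp add: Ccone_def)
        have "1 / Inf SB = (1/\<alpha>') * s' 0" using fun_cong[OF s'(2), of 0] by (simp add: s_def)
        then have "s' 0 = \<alpha>' / Inf SB" using ap by (simp add: field_simps)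
        with s'0 have "\<alpha>' * Inf SL / Inf SB \<ge> 1" by simp
        then have "Inf SB \<le> \<alpha>' * Inf SL" using pos by (simp add: field_simps)
        also have "\<dots> \<le> \<alpha>' * (1/\<alpha>)" using SLle ap by (intro mult_left_mono) auto
        also have "\<dots> < 1" using lt a1 by (simp add: field_simps)
        finally show ?thesis .
      qed
      then obtain t where t: "t \<in> SB" "t < 1" using SBne SBbd cInf_less_iff by blast
      then obtain b where b: "b \<in> B" "t > 0" "r = t *\<^sub>R (b - f)" unfolding SB_def mem_scaled_shift by blast
      have peq: "p = (1 - t) *\<^sub>R f + t *\<^sub>R b" using b(3) by (simp add: r_def algebra_simps)
      show ?thesis
      proof (cases "b = f")
        case True then show ?thesis using peq fB by (simp add: algebra_simps)
      next
        case False
        have "p \<noteq> f"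
        proof
          assume "p = f"
          then have "t *\<^sub>R (b - f) = 0" using peq by (simp add: algebra_simps)
          then show False using b(2) False by simp
        qed
        moreover have "p \<noteq> b"
        proof
          assume "p = b"
          then have "(1 - t) *\<^sub>R (f - b) = 0" using peq by (simp add: algebra_simps)
          then show False using t(2) False by simp
        qed
        ultimately have "p \<in> open_segment f b" unfolding open_segment_def closed_segment_def
          using b(2) t(2) peq by auto
        moreover have "b \<in> closure B" using b(1) closure_subset by blast
        ultimately show ?thesis
          using in_interior_closure_convex_segment[OF _ fB] lfB unfolding lattice_free_def by blast
      qed
    qed
    have exG: "\<exists>G. G facet_of B \<and> fst (ab G) \<bullet> z i \<ge> snd (ab G)" if "i \<le> CARD('n)" for i
    proof (rule facet_witness[OF pB fB _ intB abG])
      show "z i \<notin> interior B" using zl that lfB unfolding lattice_free_def by blast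
    qed
    then obtain Gf where Gf: "\<And>i. i \<le> CARD('n) \<Longrightarrow> Gf i facet_of B \<and> fst (ab (Gf i)) \<bullet> z i \<ge> snd (ab (Gf i))"
      by metis
    have "\<not> inj_on Gf {..CARD('n)}"
    proof
      assume "inj_on Gf {..CARD('n)}"
      then have "card {..CARD('n)} \<le> card {G. G facet_of B}"
        using Gf finF by (intro card_inj_on_le) auto
      then show False using cardF by simp
    qed
    then obtain i j where ij: "i \<le> CARD('n)" "j \<le> CARD('n)" "i \<noteq> j" "Gf i = Gf j"
      unfolding inj_on_def by auto
    obtain p where p: "p \<in> closed_segment (z i) (z j)" "p \<in> shrink \<alpha> f L" using seg ij by blast
    define G where "G = Gf i"
    have G: "G facet_of B" using Gf ij by (simp add: G_def)
    have "fst (ab G) \<bullet> z i \<ge> snd (ab G)" "fst (ab G) \<bullet> z j \<ge> snd (ab G)"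
      using Gf[of i] Gf[of j] ij by (auto simp: G_def)
    then have "fst (ab G) \<bullet> p \<ge> snd (ab G)"
      using seg_lin_ge[OF p(1)] by blast
    moreover have "p \<in> B" "p \<notin> G" using inB[OF p(2)] intB G by auto
    ultimately show False using abG[OF G] by fastforce
  qed
  show ?thesis unfolding rho_def
    by (rule Inf_greatest) (auto intro: key)
qed



lemma rel_interior_pyramid:
  fixes X :: "'a::euclidean_space set"
  assumes "X \<noteq> {}"
  shows "rel_interior (convex hull (insert w X)) =
     {u *\<^sub>R w + (1-u) *\<^sub>R y | u y. 0 < u \<and> u < 1 \<and> y \<in> rel_interior (convex hull X)}"
proof -
  define S where "S b = (if b then {w} else convex hull X)" for b
  have U: "\<Union>(S ` UNIV) = insert w (convex hull X)" by (auto simp: S_def UNIV_bool)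
  have H: "convex hull (insert w X) = convex hull (\<Union>(S ` UNIV))"
    unfolding U by (rule hull_insert)
  have R: "rel_interior (convex hull (\<Union>(S ` UNIV))) =
    {sum (\<lambda>i. c i *\<^sub>R s i) UNIV | c s. (\<forall>i\<in>UNIV. c i > 0) \<and> sum c UNIV = 1 \<and>
      (\<forall>i\<in>UNIV. s i \<in> rel_interior(S i))}"
    by (rule rel_interior_convex_hull_union) (auto simp: S_def assms convex_convex_hull)
  show ?thesis unfolding H R
  proof (intro equalityI subsetI)
    fix x assume "x \<in> {sum (\<lambda>i. c i *\<^sub>R s i) UNIV | c s. (\<forall>i\<in>UNIV. c i > 0) \<and> sum c UNIV = 1 \<and>
      (\<forall>i\<in>UNIV. s i \<in> rel_interior(S i))}"
    then obtain c s where cs: "\<forall>i. c i > 0" "sum c UNIV = 1" "\<forall>i. s i \<in> rel_interior (S i)"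
      "x = sum (\<lambda>i. c i *\<^sub>R s i) UNIV" by blast
    have "s True = w" using cs(3)[rule_format, of True] by (simp add: S_def)
    moreover have "c False = 1 - c True" using cs(2) by (simp add: UNIV_bool)
    ultimately have "x = c True *\<^sub>R w + (1 - c True) *\<^sub>R s False" using cs(4) by (simp add: UNIV_bool)
    moreover have "s False \<in> rel_interior (convex hull X)" using cs(3)[rule_format, of False] by (simp add: S_def)
    moreover have "0 < c True" "c True < 1" using cs(1) cs(2) by (auto simp: UNIV_bool) (smt (verit) cs(1))
    ultimately show "x \<in> {u *\<^sub>R w + (1-u) *\<^sub>R y | u y. 0 < u \<and> u < 1 \<and> y \<in> rel_interior (convex hull X)}"
      by blast
  next
    fix x assume "x \<in> {u *\<^sub>R w + (1-u) *\<^sub>R y | u y. 0 < u \<and> u < 1 \<and> y \<in> rel_interior (convex hull X)}"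
    then obtain u y where uy: "0 < u" "u < 1" "y \<in> rel_interior (convex hull X)" "x = u *\<^sub>R w + (1-u) *\<^sub>R y"
      by blast
    define c where "c b = (if b then u else 1 - u)" for b
    define s where "s b = (if b then w else y)" for b
    have "\<forall>i\<in>UNIV. c i > 0" "sum c UNIV = 1" "\<forall>i\<in>UNIV. s i \<in> rel_interior(S i)"
      "x = sum (\<lambda>i. c i *\<^sub>R s i) UNIV"
      using uy by (auto simp: c_def s_def S_def UNIV_bool)
    then show "x \<in> {sum (\<lambda>i. c i *\<^sub>R s i) UNIV | c s. (\<forall>i\<in>UNIV. c i > 0) \<and> sum c UNIV = 1 \<and>
      (\<forall>i\<in>UNIV. s i \<in> rel_interior(S i))}" by blast
  qed
qed

lemma facets_simplex:
  fixes V :: "'a::euclidean_space set"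
  assumes "\<not> affine_dependent V" "2 \<le> card V"
  shows "{G. G facet_of convex hull V} = (\<lambda>v. convex hull (V - {v})) ` V"
  using facet_of_convex_hull_affine_independent_alt[OF assms(1)] assms(2) by auto

lemma inj_facets_simplex:
  fixes V :: "'a::euclidean_space set"
  assumes "\<not> affine_dependent V"
  shows "inj_on (\<lambda>v. convex hull (V - {v})) V"
proof (rule inj_onI)
  fix v v' assume vv: "v \<in> V" "v' \<in> V" "convex hull (V - {v}) = convex hull (V - {v'})"
  show "v = v'"
  proof (rule ccontr)
    assume "v \<noteq> v'"
    then have "v' \<in> convex hull (V - {v})" using vv by (intro hull_inc) auto
    then have "v' \<in> affine hull (V - {v'})" using vv(3) convex_hull_subset_affine_hull by blast
    then show False using assms vv(2) unfolding affine_dependent_def by blast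
  qed
qed



lemma simplex_max_lattice_free:
  fixes V :: "(real^'n) set"
  assumes ai: "\<not> affine_dependent V" and cV: "card V = CARD('n) + 1"
    and lf: "\<forall>x \<in> interior (convex hull V). \<not> lattice_pt x"
    and zs: "\<forall>v\<in>V. \<exists>z. lattice_pt z \<and> z \<in> rel_interior (convex hull (V - {v}))"
  shows "max_lattice_free (convex hull V)"
proof -
  have fin: "finite V" using ai aff_independent_finite by blast
  have adV: "aff_dim V = int CARD('n)" using aff_dim_affine_independent[OF ai] cV by simp
  then have ad: "aff_dim (convex hull V) = int CARD('n)" by (simp add: aff_dim_convex_hull)
  have ahV: "affine hull V = UNIV" using adV aff_dim_eq_full[of V] by simp
  have riV: "rel_interior (convex hull V) = interior (convex hull V)"
    using ad by (simp add: interior_rel_interior)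
  have lfL: "lattice_free (convex hull V)"
    unfolding lattice_free_def using ad lf fin
    by (auto simp: compact_imp_closed finite_imp_compact_convex_hull)
  have "B' = convex hull V" if lB: "lattice_free B'" and sub: "convex hull V \<subseteq> B'" for B'
  proof (rule ccontr)
    assume "B' \<noteq> convex hull V"
    then obtain y where y: "y \<in> B'" "y \<notin> convex hull V" using sub by blast
    have "y \<in> affine hull V" using ahV by simp
    then obtain c where c: "sum c V = 1" "(\<Sum>v\<in>V. c v *\<^sub>R v) = y"
      using affine_hull_finite[OF fin] by blast
    obtain v0 where v0: "v0 \<in> V" "c v0 < 0"
    proof (rule ccontr)
      assume "\<not> thesis"
      then have "\<forall>v\<in>V. 0 \<le> c v" using that by force
      then have "y \<in> convex hull V" using c convex_hull_finite[OF fin] by blast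
      then show False using y by blast
    qed
    obtain z where z: "lattice_pt z" "z \<in> rel_interior (convex hull (V - {v0}))" using zs v0 by blast
    have ai0: "\<not> affine_dependent (V - {v0})" using ai affine_independent_Diff by blast
    obtain d where d: "\<forall>x\<in>V - {v0}. 0 < d x" "sum d (V - {v0}) = 1" "(\<Sum>x\<in>V - {v0}. d x *\<^sub>R x) = z"
      using z(2) rel_interior_convex_hull_explicit[OF ai0] by blast
    define d' where "d' v = (if v = v0 then 0 else d v)" for v
    have d'1: "sum d' V = 1"
    proof -
      have "sum d' V = d' v0 + sum d' (V - {v0})" by (rule sum.remove[OF fin v0(1)])
      also have "sum d' (V - {v0}) = sum d (V - {v0})" by (rule sum.cong) (auto simp: d'_def)
      finally show ?thesis using d(2) by (simp add: d'_def)
    qed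
    have d'z: "(\<Sum>v\<in>V. d' v *\<^sub>R v) = z"
    proof -
      have "(\<Sum>v\<in>V. d' v *\<^sub>R v) = d' v0 *\<^sub>R v0 + (\<Sum>v\<in>V - {v0}. d' v *\<^sub>R v)"
        by (rule sum.remove[OF fin v0(1)])
      also have "(\<Sum>v\<in>V - {v0}. d' v *\<^sub>R v) = (\<Sum>v\<in>V - {v0}. d v *\<^sub>R v)"
        by (rule sum.cong) (auto simp: d'_def)
      finally show ?thesis using d(3) by (simp add: d'_def)
    qed
    have ev1: "\<forall>v\<in>V - {v0}. eventually (\<lambda>t. 0 < (1+t) * d v - t * c v) (at_right (0::real))"
    proof
      fix v assume v: "v \<in> V - {v0}"
      have "((\<lambda>t. (1+t) * d v - t * c v) \<longlongrightarrow> (1+0) * d v - 0 * c v) (at_right (0::real))"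
        by (intro tendsto_intros)
      then show "eventually (\<lambda>t. 0 < (1+t) * d v - t * c v) (at_right (0::real))"
        using d(1) v by (intro order_tendstoD(1)) auto
    qed
    have "eventually (\<lambda>t. 0 < t \<and> (\<forall>v\<in>V - {v0}. 0 < (1+t) * d v - t * c v)) (at_right (0::real))"
      using eventually_ball_finite[OF _ ev1] fin eventually_at_right_less[of "0::real"]
      by (auto intro: eventually_conj)
    then obtain t where t: "0 < t" "\<forall>v\<in>V - {v0}. 0 < (1+t) * d v - t * c v"
      using eventually_happens[of _ "at_right (0::real)"] by auto
    define e where "e v = (1+t) * d' v - t * c v" for v
    have epos: "\<forall>v\<in>V. 0 < e v"
    proof
      fix v assume "v \<in> V"
      show "0 < e v"
      proof (cases "v = v0")
        case True then show ?thesis using t(1) v0(2) by (simp add: e_def d'_def mult_pos_neg)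
      next
        case False then show ?thesis using t(2) \<open>v \<in> V\<close> by (simp add: e_def d'_def)
      qed
    qed
    have e1: "sum e V = 1" unfolding e_def using d'1 c(1)
      by (simp add: sum_subtractf sum_distrib_left[symmetric])
    define q where "q = (1+t) *\<^sub>R z - t *\<^sub>R y"
    have eq: "(\<Sum>v\<in>V. e v *\<^sub>R v) = q" unfolding e_def q_def
      by (simp add: scaleR_left_diff_distrib sum_subtractf scaleR_sum_right[symmetric] d'z c(2) flip: scaleR_scaleR)
    have "q \<in> rel_interior (convex hull V)"
      using rel_interior_convex_hull_explicit[OF ai] epos e1 eq by blast
    then have qi: "q \<in> interior B'" using riV sub interior_mono by blast
    have zL: "z \<in> convex hull V"
      using z(2) rel_interior_subset hull_mono[of "V - {v0}" V] by blast
    have "z \<in> open_segment q y"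
    proof -
      define s where "s = t / (1+t)"
      have s: "0 < s" "s < 1" using t(1) by (auto simp: s_def)
      have h: "1 / (1 + t) + t / (1 + t) = (1::real)" using t(1) by (simp add: add_divide_distrib[symmetric])
      have zeq: "z = (1 - s) *\<^sub>R q + s *\<^sub>R y"
        using t(1) by (simp add: s_def q_def algebra_simps divide_simps) (simp only: scaleR_add_left[symmetric] h scaleR_one)
      have "z \<noteq> y" using zL y(2) by blast
      moreover have "z \<noteq> q"
      proof
        assume "z = q"
        then have "t *\<^sub>R (z - y) = 0" unfolding q_def by (simp add: algebra_simps) (metis eq_commute)
        then show False using t(1) \<open>z \<noteq> y\<close> by auto
      qed
      ultimately show ?thesis unfolding open_segment_def closed_segment_def
        using zeq s by auto
    qed
    moreover have "convex B'" using lB unfolding lattice_free_def by blast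
    ultimately have "z \<in> interior B'"
      using in_interior_closure_convex_segment[OF _ qi, of y] y(1) closure_subset by blast
    then show False using lB z(1) unfolding lattice_free_def by blast
  qed
  then show ?thesis unfolding max_lattice_free_def using lfL by blast
qed



definition unimod :: "(real^'n \<Rightarrow> real^'n) \<Rightarrow> (real^'n \<Rightarrow> real^'n) \<Rightarrow> bool" where
  "unimod U Ui \<longleftrightarrow> linear U \<and> linear Ui \<and> (\<forall>y. U (Ui y) = y) \<and> (\<forall>y. Ui (U y) = y) \<and>
     (\<forall>x. lattice_pt x \<longrightarrow> lattice_pt (U x)) \<and> (\<forall>x. lattice_pt x \<longrightarrow> lattice_pt (Ui x))"

lemma unimod_id: "unimod id id"
  by (simp add: unimod_def linear_id)

lemma unimod_comp: "unimod U Ui \<Longrightarrow> unimod U' Ui' \<Longrightarrow> unimod (U' \<circ> U) (Ui \<circ> Ui')"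
  by (simp add: unimod_def linear_compose)

definition elem :: "real \<Rightarrow> 'n \<Rightarrow> 'n \<Rightarrow> real^'n \<Rightarrow> real^'n" where
  "elem s i j x = x + (s * x$j) *\<^sub>R axis i 1"

lemma elem_nth: "(elem s i j x)$l = x$l + (if l = i then s * x$j else 0)"
  by (simp add: elem_def axis_def)

lemma linear_elem: "linear (elem s i j)"
  by (rule linearI) (simp_all add: vec_eq_iff elem_nth algebra_simps)

lemma unimod_elem:
  assumes "i \<noteq> j" "s \<in> \<int>"
  shows "unimod (elem s i j) (elem (-s) i j)"
  unfolding unimod_def
proof (intro conjI allI impI)
  show "linear (elem s i j)" "linear (elem (-s) i j)" by (rule linear_elem)+
  show "elem s i j (elem (- s) i j y) = y" for y using assms by (simp add: vec_eq_iff elem_nth)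
  show "elem (-s) i j (elem s i j y) = y" for y using assms by (simp add: vec_eq_iff elem_nth)
  show "lattice_pt (elem s i j x)" if "lattice_pt x" for x
    using that assms by (auto simp: lattice_pt_def elem_nth)
  show "lattice_pt (elem (-s) i j x)" if "lattice_pt x" for x
    using that assms by (auto simp: lattice_pt_def elem_nth)
qed

definition Nm :: "real^'n \<Rightarrow> nat" where
  "Nm p = (\<Sum>i\<in>UNIV. nat \<lfloor>\<bar>p$i\<bar>\<rfloor>)"

lemma int_abs_less_nat:
  fixes x y :: real
  assumes "x \<in> \<int>" "y \<in> \<int>" "\<bar>x\<bar> < \<bar>y\<bar>"
  shows "nat \<lfloor>\<bar>x\<bar>\<rfloor> < nat \<lfloor>\<bar>y\<bar>\<rfloor>"
proof -
  obtain a b where ab: "x = of_int a" "y = of_int b" using assms(1,2) Ints_cases by metis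
  then have "\<bar>x\<bar> = of_int \<bar>a\<bar>" "\<bar>y\<bar> = of_int \<bar>b\<bar>" by simp_all
  then show ?thesis using assms(3) by (simp only: floor_of_int) linarith
qed

lemma euclid_reduce:
  fixes p :: "real^'n"
  assumes "\<forall>i. p$i \<in> \<int>"
  shows "\<exists>U Ui k c. unimod U Ui \<and> U p = c *\<^sub>R axis k 1"
  using assms
proof (induction "Nm p" arbitrary: p rule: less_induct)
  case less
  show ?case
  proof (cases "\<exists>i j. i \<noteq> j \<and> p$i \<noteq> 0 \<and> p$j \<noteq> 0")
    case False
    show ?thesis
    proof (cases "\<exists>k. p$k \<noteq> 0")
      case True
      then obtain k where k: "p$k \<noteq> 0" by blast
      have "p = (p$k) *\<^sub>R axis k 1" using False k by (auto simp: vec_eq_iff axis_def)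
      then show ?thesis using unimod_id by (metis id_apply)
    next
      case False
      then have "p = 0 *\<^sub>R axis undefined 1" by (simp add: vec_eq_iff)
      then show ?thesis using unimod_id by (metis id_apply)
    qed
  next
    case True
    have "\<exists>i j. i \<noteq> j \<and> p$i \<noteq> 0 \<and> p$j \<noteq> 0 \<and> \<bar>p$j\<bar> \<le> \<bar>p$i\<bar>"
    proof -
      obtain i0 j0 where ij0: "i0 \<noteq> j0" "p$i0 \<noteq> 0" "p$j0 \<noteq> 0" using True by blast
      show ?thesis
      proof (cases "\<bar>p$j0\<bar> \<le> \<bar>p$i0\<bar>")
        case True then show ?thesis using ij0 by blast
      next
        case False then show ?thesis using ij0 by (intro exI[of _ j0] exI[of _ i0]) auto
      qed
    qed
    then obtain i j where ij: "i \<noteq> j" "p$i \<noteq> 0" "p$j \<noteq> 0" "\<bar>p$j\<bar> \<le> \<bar>p$i\<bar>" by blast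
    define s :: real where "s = (if (p$i > 0) = (p$j > 0) then -1 else 1)"
    have sZ: "s \<in> \<int>" by (simp add: s_def)
    define p' where "p' = elem s i j p"
    have p'ie: "p'$i = p$i + s * p$j" by (simp add: p'_def elem_nth)
    have p'i: "\<bar>p'$i\<bar> < \<bar>p$i\<bar>"
    proof (cases "p$i > 0")
      case True
      show ?thesis
      proof (cases "p$j > 0")
        case True
        then have "s = -1" using \<open>p$i > 0\<close> by (simp add: s_def)
        then show ?thesis using p'ie ij \<open>p$i > 0\<close> True by simp
      next
        case False
        then have "s = 1" using \<open>p$i > 0\<close> by (simp add: s_def)
        then show ?thesis using p'ie ij \<open>p$i > 0\<close> False by simp
      qed
    next
      case False
      then have ni: "p$i < 0" using ij(2) by simp
      show ?thesis
      proof (cases "p$j > 0")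
        case True
        then have "s = 1" using ni by (simp add: s_def)
        then show ?thesis using p'ie ij ni True by simp
      next
        case False
        then have "s = -1" using ni by (simp add: s_def)
        then show ?thesis using p'ie ij ni False by simp
      qed
    qed
    have p'o: "p'$l = p$l" if "l \<noteq> i" for l using that by (simp add: p'_def elem_nth)
    have p'Z: "\<forall>l. p'$l \<in> \<int>" using less.prems sZ by (simp add: p'_def elem_nth)
    have "Nm p' < Nm p" unfolding Nm_def
    proof (rule sum_strict_mono_ex1)
      show "\<forall>x\<in>UNIV. nat \<lfloor>\<bar>p'$x\<bar>\<rfloor> \<le> nat \<lfloor>\<bar>p$x\<bar>\<rfloor>"
        using p'i p'o by (metis order.refl less_imp_le int_abs_less_nat p'Z less.prems)
      show "\<exists>a\<in>UNIV. nat \<lfloor>\<bar>p'$a\<bar>\<rfloor> < nat \<lfloor>\<bar>p$a\<bar>\<rfloor>"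
        using int_abs_less_nat[OF p'Z[rule_format, of i] less.prems[rule_format, of i] p'i] by blast
    qed simp
    then obtain U Ui k c where "unimod U Ui" "U p' = c *\<^sub>R axis k 1"
      using less.hyps p'Z by blast
    then show ?thesis
      using unimod_comp[OF unimod_elem[OF ij(1) sZ]] unfolding p'_def
      by (metis comp_apply)
  qed
qed

lemma common_denom:
  fixes f :: "real^'n"
  assumes "\<forall>i. f $ i \<in> \<rat>"
  shows "\<exists>q::int. q > 0 \<and> (\<forall>i. of_int q * f$i \<in> \<int>)"
proof -
  have "\<forall>i. \<exists>ab::int\<times>int. snd ab > 0 \<and> f$i = of_int (fst ab) / of_int (snd ab)"
  proof
    fix i
    obtain a b :: int where "b > 0" "f$i = of_int a / of_int b" using assms Rats_cases' by metis
    then show "\<exists>ab::int\<times>int. snd ab > 0 \<and> f$i = of_int (fst ab) / of_int (snd ab)"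
      by (intro exI[of _ "(a,b)"]) auto
  qed
  then obtain ab :: "'n \<Rightarrow> int \<times> int" where ab: "\<forall>i. snd (ab i) > 0 \<and> f$i = of_int (fst (ab i)) / of_int (snd (ab i))"
    by metis
  define q where "q = (\<Prod>i\<in>UNIV. snd (ab i))"
  have "q > 0" unfolding q_def using ab by (simp add: prod_pos)
  moreover have "of_int q * f$i \<in> \<int>" for i
  proof -
    have "q = snd (ab i) * (\<Prod>l\<in>UNIV - {i}. snd (ab l))"
      unfolding q_def by (rule prod.remove) auto
    then have "of_int q * f$i = of_int (fst (ab i) * (\<Prod>l\<in>UNIV - {i}. snd (ab l)))"
      using ab[rule_format, of i] by (simp add: field_simps)
    then show ?thesis by (metis Ints_of_int)
  qed
  ultimately show ?thesis by blast
qed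

lemma normal_form:
  fixes f :: "real^'n"
  assumes "\<forall>i. f $ i \<in> \<rat>" "\<not> lattice_pt f"
  shows "\<exists>U Ui k \<gamma>. unimod U Ui \<and> U f = \<gamma> *\<^sub>R axis k 1 \<and> \<gamma> \<notin> \<int>"
proof -
  obtain q :: int where q: "q > 0" "\<forall>i. of_int q * f$i \<in> \<int>" using common_denom[OF assms(1)] by blast
  define p where "p = of_int q *\<^sub>R f"
  have "\<forall>i. p$i \<in> \<int>" using q by (simp add: p_def)
  then obtain U Ui k c where UU: "unimod U Ui" and Up: "U p = c *\<^sub>R axis k 1"
    using euclid_reduce by blast
  have lin: "linear U" "linear Ui" using UU by (auto simp: unimod_def)
  have "U p = of_int q *\<^sub>R U f" unfolding p_def using lin(1) by (simp add: linear_scale)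
  then have "U f = (1 / of_int q) *\<^sub>R U p" using q(1) by simp
  then have Uf: "U f = (c / of_int q) *\<^sub>R axis k 1" using Up by simp
  have "c / of_int q \<notin> \<int>"
  proof
    assume g: "c / of_int q \<in> \<int>"
    have "f = Ui (U f)" using UU by (simp add: unimod_def)
    also have "\<dots> = (c / of_int q) *\<^sub>R Ui (axis k 1)" using Uf lin(2) by (simp add: linear_scale)
    finally have fe: "f = (c / of_int q) *\<^sub>R Ui (axis k 1)" .
    have "lattice_pt (axis k (1::real))" by (simp add: lattice_pt_def axis_def)
    then have "lattice_pt (Ui (axis k 1))" using UU by (simp add: unimod_def)
    then have "lattice_pt f" unfolding lattice_pt_def
    proof (intro allI)
      fix i assume "\<forall>i. Ui (axis k 1) $ i \<in> \<int>"
      moreover have "f$i = (c / of_int q) * Ui (axis k 1) $ i" by (subst fe) simp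
      ultimately show "f$i \<in> \<int>" using g Ints_mult by metis
    qed
    then show False using assms(2) by blast
  qed
  then show ?thesis using UU Uf by blast
qed



lemma rel_interior_affinity:
  fixes S :: "'a::euclidean_space set"
  assumes "c \<noteq> 0"
  shows "rel_interior ((\<lambda>x. a + c *\<^sub>R x) ` S) = (\<lambda>x. a + c *\<^sub>R x) ` rel_interior S"
proof -
  have e: "(\<lambda>x. a + c *\<^sub>R x) ` T = (\<lambda>x. a + x) ` ((\<lambda>x. c *\<^sub>R x) ` T)" for T :: "'a set"
    by (simp add: image_image)
  show ?thesis unfolding e rel_interior_translation
    using rel_interior_scaleR[OF assms, of S] by simp
qed

lemma affine_independent_affinity:
  fixes S :: "'a::euclidean_space set"
  assumes "c \<noteq> 0" "\<not> affine_dependent S"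
  shows "\<not> affine_dependent ((\<lambda>x. a + c *\<^sub>R x) ` S)"
proof -
  have e: "(\<lambda>x. a + c *\<^sub>R x) ` S = (\<lambda>x. a + x) ` ((\<lambda>x. c *\<^sub>R x) ` S)"
    by (simp add: image_image)
  have inj: "inj ((*\<^sub>R) c :: 'a \<Rightarrow> 'a)" using assms(1) by (intro injI) (rule scaleR_left_imp_eq)
  have lin: "linear ((*\<^sub>R) c)" by (simp add: linear_scaleR)
  have fin: "finite S" using assms(2) aff_independent_finite by blast
  have "aff_dim ((\<lambda>x. c *\<^sub>R x) ` S) = aff_dim S" using aff_dim_injective_linear_image[OF lin inj] by simp
  moreover have "card ((\<lambda>x. c *\<^sub>R x) ` S) = card S" using inj by (simp add: card_image inj_on_def)
  ultimately have "\<not> affine_dependent ((\<lambda>x. c *\<^sub>R x) ` S)"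
    using assms(2) fin by (simp add: affine_independent_iff_card)
  then show ?thesis unfolding e using affine_dependent_translation_eq[of "(\<lambda>x. c *\<^sub>R x) ` S" a] by blast
qed

lemma int_between: "(n::real) \<in> \<int> \<Longrightarrow> -1 < n \<Longrightarrow> n < 1 \<Longrightarrow> n = 0"
  by (metis Ints_cases of_int_0 of_int_less_iff of_int_minus of_int_1 zless_add1_eq zle_add1_eq_le
      add.left_neutral le_less not_less diff_minus_eq_add uminus_add_conv_diff zle_diff1_eq)

locale constr =
  fixes U Ui :: "real^'n \<Rightarrow> real^'n" and f :: "real^'n" and k :: 'n and \<gamma> \<alpha> :: real
  assumes um: "unimod U Ui" and Uf: "U f = \<gamma> *\<^sub>R axis k 1" and gZ: "\<gamma> \<notin> \<int>" and a1: "\<alpha> > 1"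
begin

definition lev :: "'n \<Rightarrow> real^'n \<Rightarrow> real" where "lev j x = (U x)$j"
definition bv :: "'n \<Rightarrow> real^'n" where "bv j = Ui (axis j 1)"
definition AD :: "'n set \<Rightarrow> (real^'n) set" where "AD D = {x. \<forall>j. j \<notin> D \<longrightarrow> lev j x = 0}"
definition eps :: real where "eps = 1 / (2 * \<alpha>)"
definition K :: real where "K = 1 + 2 * \<alpha>"
definition Tm :: "'n \<Rightarrow> real^'n \<Rightarrow> real^'n" where "Tm j x = (f - K *\<^sub>R f + bv j) + K *\<^sub>R x"
definition wv :: "'n \<Rightarrow> real^'n" where "wv j = f - eps *\<^sub>R bv j"

lemma linU: "linear U" and linUi: "linear Ui" using um by (auto simp: unimod_def)

lemma lev_add: "lev j (x + y) = lev j x + lev j y"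
  by (simp add: lev_def linear_add[OF linU])
lemma lev_diff: "lev j (x - y) = lev j x - lev j y"
  by (simp add: lev_def linear_diff[OF linU])
lemma lev_scale: "lev j (c *\<^sub>R x) = c * lev j x"
  by (simp add: lev_def linear_scale[OF linU])
lemma lev_bv: "lev j (bv l) = (if j = l then 1 else 0)"
  using um by (simp add: lev_def bv_def unimod_def axis_def)
lemma lev_f: "lev j f = (if j = k then \<gamma> else 0)"
  by (simp add: lev_def Uf axis_def)
lemma lev_lattice: "lattice_pt x \<Longrightarrow> lev j x \<in> \<int>"
  using um by (simp add: lev_def unimod_def lattice_pt_def)
lemma bv_lattice: "lattice_pt (bv j)"
  using um by (simp add: bv_def unimod_def lattice_pt_def axis_def)
lemma f_eq: "f = \<gamma> *\<^sub>R bv k"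
proof -
  have "f = Ui (U f)" using um by (simp add: unimod_def)
  then show ?thesis by (simp add: Uf bv_def linear_scale[OF linUi])
qed

lemma eps_pos: "eps > 0" and eps_lt1: "eps < 1" and K_eq: "K = (1 + eps) / eps" and K_gt: "K > \<alpha>"
  using a1 by (auto simp: eps_def K_def field_simps)

lemma Tm_eq: "Tm j x = f + K *\<^sub>R (x - f) + bv j"
  by (simp add: Tm_def algebra_simps)

lemma lattice_add: "lattice_pt x \<Longrightarrow> lattice_pt y \<Longrightarrow> lattice_pt (x + y)"
  by (simp add: lattice_pt_def)
lemma lattice_int_scale: "lattice_pt x \<Longrightarrow> c \<in> \<int> \<Longrightarrow> lattice_pt (c *\<^sub>R x)"
  by (simp add: lattice_pt_def)

lemma shrink_mem: "x \<in> L \<Longrightarrow> (1/\<alpha>) *\<^sub>R x + (1 - 1/\<alpha>) *\<^sub>R f \<in> shrink \<alpha> f L"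
  unfolding shrink_def by (rule imageI)

lemma f_in_shrink: "f \<in> L \<Longrightarrow> f \<in> shrink \<alpha> f L"
  using shrink_mem[of f L] by (simp add: algebra_simps)

lemma affine_AD: "affine (AD D)"
  unfolding affine_def AD_def by (auto simp: lev_add lev_scale)

lemma affine_lev: "affine {x. lev j x = c}"
  unfolding affine_def by (auto simp: lev_add lev_scale) (metis distrib_right mult_1)

definition Inv :: "'n set \<Rightarrow> (real^'n) set \<Rightarrow> (real^'n \<Rightarrow> real^'n) \<Rightarrow> bool" where
  "Inv D V z \<longleftrightarrow> finite V \<and> \<not> affine_dependent V \<and> card V = card D + 1 \<and> V \<subseteq> AD D \<and>
     f \<in> rel_interior (convex hull V) \<and> (\<forall>x \<in> rel_interior (convex hull V). \<not> lattice_pt x) \<and>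
     (\<forall>v\<in>V. lattice_pt (z v) \<and> z v \<in> rel_interior (convex hull (V - {v}))) \<and>
     (\<forall>v\<in>V. \<forall>v'\<in>V. v \<noteq> v' \<longrightarrow> closed_segment (z v) (z v') \<inter> shrink \<alpha> f (convex hull V) \<noteq> {})"

end



context constr begin

lemma bv_ne: "bv l \<noteq> 0"
proof
  assume "bv l = 0"
  then have "lev l (bv l) = lev l (0 *\<^sub>R bv l)" by simp
  then show False by (simp only: lev_scale lev_bv) simp
qed

lemma Inv_base: "\<exists>V z. Inv {k} V z"
proof -
  define m :: real where "m = of_int \<lfloor>\<gamma>\<rfloor>"
  define a where "a = m *\<^sub>R bv k"
  define b where "b = (m + 1) *\<^sub>R bv k"
  have mZ: "m \<in> \<int>" by (simp add: m_def)
  have mlt: "m < \<gamma>" "\<gamma> < m + 1"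
  proof -
    have "m \<le> \<gamma>" by (simp add: m_def)
    moreover have "m \<noteq> \<gamma>" using gZ mZ by auto
    ultimately show "m < \<gamma>" by simp
    show "\<gamma> < m + 1" by (simp add: m_def)
  qed
  have la: "lev l a = (if l = k then m else 0)" for l by (simp add: a_def lev_scale lev_bv)
  have lb: "lev l b = (if l = k then m + 1 else 0)" for l by (simp add: b_def lev_scale lev_bv)
  have ab: "a \<noteq> b" using la[of k] lb[of k] by auto
  define u where "u = \<gamma> - m"
  have u: "0 < u" "u < 1" using mlt by (auto simp: u_def)
  have fab: "f = (1 - u) *\<^sub>R a + u *\<^sub>R b"
    by (simp add: f_eq a_def b_def u_def algebra_simps)
  have hull: "convex hull {a, b} = closed_segment a b" by (simp add: segment_convex_hull)
  have ri: "rel_interior (convex hull {a, b}) = open_segment a b"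
    using ab by (simp add: hull rel_interior_closed_segment)
  define z where "z x = (if x = a then b else a)" for x
have zz: "lattice_pt (z v) \<and> z v \<in> rel_interior (convex hull ({a, b} - {v}))" if "v \<in> {a, b}" for v
  proof -
    have lat: "lattice_pt a" "lattice_pt b"
      using lattice_int_scale[OF bv_lattice] mZ by (auto simp: a_def b_def)
    show ?thesis
    proof (cases "v = a")
      case True
      then have "{a, b} - {v} = {b}" using ab by auto
      then show ?thesis using True lat by (simp add: z_def)
    next
      case False
      then have "v = b" using that by simp
      then have "{a, b} - {v} = {a}" using ab by auto
      then show ?thesis using False lat \<open>v = b\<close> ab by (simp add: z_def)
    qed
  qed
  have "Inv {k} {a, b} z" unfolding Inv_def
  proof (intro conjI ballI impI)
    show "finite {a, b}" by simp
    show "\<not> affine_dependent {a, b}" by simp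
    show "card {a, b} = card {k} + 1" using ab by simp
    show "{a, b} \<subseteq> AD {k}" using la lb by (auto simp: AD_def)
    show fri: "f \<in> rel_interior (convex hull {a, b})"
    proof -
      have "f \<in> closed_segment a b" using fab u unfolding closed_segment_def by auto
      moreover have "f \<noteq> a" "f \<noteq> b" using lev_f[of k] la[of k] lb[of k] mlt by auto
      ultimately show ?thesis using ri by (simp add: open_segment_def)
    qed
    show "\<not> lattice_pt x" if "x \<in> rel_interior (convex hull {a, b})" for x
    proof
      assume lx: "lattice_pt x"
      from that ri obtain t where t: "0 \<le> t" "t \<le> 1" "x = (1 - t) *\<^sub>R a + t *\<^sub>R b" "x \<noteq> a" "x \<noteq> b"
        by (auto simp: open_segment_def closed_segment_def)
      have t01: "0 < t" "t < 1" using t ab by (auto simp: le_less)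
      have "lev k x = (1 - t) * lev k a + t * lev k b" unfolding t(3) by (simp only: lev_add lev_scale)
      then have "lev k x = m + t" by (simp add: la lb algebra_simps)
      moreover have "lev k x \<in> \<int>" using lev_lattice[OF lx] .
      ultimately have "lev k x - m \<in> \<int>" using mZ by (intro Ints_diff)
      then have "t \<in> \<int>" using \<open>lev k x = m + t\<close> by simp
      then obtain n where "t = of_int n" by (auto elim: Ints_cases)
      then show False using t01 by simp
    qed
    show "lattice_pt (z v)" if "v \<in> {a, b}" for v using zz[OF that] by blast
    show "z v \<in> rel_interior (convex hull ({a, b} - {v}))" if "v \<in> {a, b}" for v using zz[OF that] by blast
    show "closed_segment (z v) (z v') \<inter> shrink \<alpha> f (convex hull {a, b}) \<noteq> {}"
      if "v \<in> {a, b}" "v' \<in> {a, b}" "v \<noteq> v'" for v v'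
    proof -
      have "f \<in> shrink \<alpha> f (convex hull {a, b})" using fri rel_interior_subset f_in_shrink by blast
      moreover have "f \<in> closed_segment (z v) (z v')"
      proof -
        have "f \<in> closed_segment a b" using fri ri open_closed_segment by blast
        then show ?thesis using that by (auto simp: z_def closed_segment_commute)
      qed
      ultimately show ?thesis by blast
    qed
  qed
  then show ?thesis by blast
qed

end



context constr begin

definition u0 :: real where "u0 = 1 / (1 + eps)"

lemma u0: "0 < u0" "u0 < 1" using eps_pos by (auto simp: u0_def)

lemma ident: "y = u0 *\<^sub>R wv j + (1 - u0) *\<^sub>R Tm j y"
proof -
  have "eps + eps * eps > 0" using eps_pos by (simp add: add_pos_pos)
  have h1: "(1 - u0) * K = 1" and h2: "1 - u0 = u0 * eps"
    using eps_pos \<open>eps + eps * eps > 0\<close> by (auto simp: u0_def K_eq field_simps)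
  have "u0 *\<^sub>R wv j + (1 - u0) *\<^sub>R Tm j y =
     (u0 + (1 - u0)) *\<^sub>R f + ((1 - u0) * K) *\<^sub>R (y - f) + ((1 - u0) - u0 * eps) *\<^sub>R bv j"
    by (simp add: wv_def Tm_eq algebra_simps)
  also have "\<dots> = y" by (simp add: h1 h2[symmetric])
  finally show ?thesis by simp
qed

lemma Tm_fun: "Tm j = (\<lambda>x. (f - K *\<^sub>R f + bv j) + K *\<^sub>R x)"
  by (rule ext) (simp add: Tm_def)

lemma K_ne: "K \<noteq> 0" using K_gt a1 by simp

lemma Tm_hull: "convex hull (Tm j ` X) = Tm j ` (convex hull X)"
  unfolding Tm_fun by (rule convex_hull_affinity)

lemma Tm_rel: "rel_interior (convex hull (Tm j ` X)) = Tm j ` rel_interior (convex hull X)"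
  unfolding Tm_hull unfolding Tm_fun by (rule rel_interior_affinity[OF K_ne])

lemma Tm_indep: "\<not> affine_dependent X \<Longrightarrow> \<not> affine_dependent (Tm j ` X)"
  unfolding Tm_fun by (rule affine_independent_affinity[OF K_ne])

lemma Tm_inj: "inj (Tm j)"
  by (rule injI) (simp add: Tm_def K_ne)

definition Tinv :: "'n \<Rightarrow> real^'n \<Rightarrow> real^'n" where "Tinv j x = f + (1/K) *\<^sub>R (x - bv j - f)"

lemma Tinv_Tm: "Tinv j (Tm j x) = x"
  using K_ne by (simp add: Tinv_def Tm_eq algebra_simps)

lemma lev_Tm: "lev l (Tm j x) = lev l f + K * (lev l x - lev l f) + lev l (bv j)"
  by (simp add: Tm_eq lev_add lev_diff lev_scale)

lemma lev_wv: "lev l (wv j) = lev l f - eps * lev l (bv j)"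
  by (simp add: wv_def lev_diff lev_scale)

lemma ztop_eq: "Tm j ((1 - 1/K) *\<^sub>R f + (1/K) *\<^sub>R z) = z + bv j"
proof -
  have "Tm j ((1 - 1/K) *\<^sub>R f + (1/K) *\<^sub>R z) = f + (K * (1/K)) *\<^sub>R (z - f) + bv j"
    by (simp add: Tm_eq algebra_simps)
  also have "\<dots> = z + bv j" using K_ne by simp
  finally show ?thesis .
qed

lemma seg_alg:
  defines "th \<equiv> \<alpha> / K"
  shows "(1 - 1/\<alpha>) *\<^sub>R zv + (1/\<alpha>) *\<^sub>R (z1 + bv j) =
     (1/\<alpha>) *\<^sub>R Tm j ((1 - th) *\<^sub>R f + th *\<^sub>R (((\<alpha> - 1)/\<alpha>) *\<^sub>R zv + (1/\<alpha>) *\<^sub>R z1)) + (1 - 1/\<alpha>) *\<^sub>R f"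
proof -
  have Kth: "K * th = \<alpha>" using K_ne by (simp add: th_def)
  have "Tm j ((1 - th) *\<^sub>R f + th *\<^sub>R (((\<alpha> - 1)/\<alpha>) *\<^sub>R zv + (1/\<alpha>) *\<^sub>R z1))
      = f + (K * th) *\<^sub>R ((((\<alpha> - 1)/\<alpha>) *\<^sub>R zv + (1/\<alpha>) *\<^sub>R z1) - f) + bv j"
    by (simp add: Tm_eq algebra_simps)
  also have "\<dots> = f + \<alpha> *\<^sub>R ((((\<alpha> - 1)/\<alpha>) *\<^sub>R zv + (1/\<alpha>) *\<^sub>R z1) - f) + bv j" by (simp add: Kth)
  also have "\<dots> = f + (\<alpha> * ((\<alpha> - 1)/\<alpha>)) *\<^sub>R zv + (\<alpha> * (1/\<alpha>)) *\<^sub>R z1 - \<alpha> *\<^sub>R f + bv j"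
    by (simp only: scaleR_add_right scaleR_diff_right scaleR_scaleR) (simp add: algebra_simps)
  also have "\<dots> = (1 - \<alpha>) *\<^sub>R f + (\<alpha> - 1) *\<^sub>R zv + z1 + bv j"
  proof -
    have c1: "\<alpha> * ((\<alpha> - 1)/\<alpha>) = \<alpha> - 1" "\<alpha> * (1/\<alpha>) = 1" using a1 by auto
    show ?thesis by (simp only: c1 scaleR_one) (simp add: algebra_simps)
  qed
  finally have e: "Tm j ((1 - th) *\<^sub>R f + th *\<^sub>R (((\<alpha> - 1)/\<alpha>) *\<^sub>R zv + (1/\<alpha>) *\<^sub>R z1)) =
     (1 - \<alpha>) *\<^sub>R f + (\<alpha> - 1) *\<^sub>R zv + z1 + bv j" .
  show ?thesis unfolding e using a1 by (simp add: algebra_simps diff_divide_distrib)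
qed

end



context constr begin

lemma Inv_step:
  assumes I: "Inv D V z" and jD: "j \<notin> D" and kD: "k \<in> D" and fD: "finite D"
  shows "\<exists>V' z'. Inv (insert j D) V' z'"
proof -
  have finV: "finite V" and aiV: "\<not> affine_dependent V" and cV: "card V = card D + 1"
    and VA: "V \<subseteq> AD D" and fri: "f \<in> rel_interior (convex hull V)"
    and lfV: "\<forall>x \<in> rel_interior (convex hull V). \<not> lattice_pt x"
    and zV: "\<forall>v\<in>V. lattice_pt (z v) \<and> z v \<in> rel_interior (convex hull (V - {v}))"
    and segV: "\<forall>v\<in>V. \<forall>v'\<in>V. v \<noteq> v' \<longrightarrow> closed_segment (z v) (z v') \<inter> shrink \<alpha> f (convex hull V) \<noteq> {}"
    using I by (simp_all add: Inv_def)
  define T where "T = Tm j"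
  define w where "w = wv j"
  define b where "b = bv j"
  have jk: "j \<noteq> k" using jD kD by auto
  have ADconv: "convex hull V \<subseteq> AD D"
    by (rule hull_minimal[OF VA]) (simp add: affine_imp_convex affine_AD)
  have lev0: "lev j x = 0" if "x \<in> convex hull V" for x using ADconv jD that by (auto simp: AD_def)
  have levf: "lev j f = 0" by (simp add: lev_f jk)
  have levT: "lev j (T x) = 1" if "x \<in> convex hull V" for x
    using that by (simp add: T_def lev_Tm levf lev0 lev_bv)
  have levw: "lev j w = - eps" by (simp add: w_def lev_wv levf lev_bv)
  have VcV: "V \<subseteq> convex hull V" by (rule hull_subset)
  have zc: "z v \<in> convex hull V" if "v \<in> V" for v
    using zV that rel_interior_subset hull_mono[of "V - {v}" V] by blast
  have fc: "f \<in> convex hull V" using fri rel_interior_subset by blast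
  have wnotT: "w \<notin> T ` (convex hull V)"
  proof
    assume "w \<in> T ` (convex hull V)"
    then obtain x where "x \<in> convex hull V" "w = T x" by blast
    then have "lev j w = 1" using levT by simp
    then show False using levw eps_pos by simp
  qed
  have wnotaff: "w \<notin> affine hull (T ` V)"
  proof
    assume "w \<in> affine hull (T ` V)"
    moreover have "affine hull (T ` V) \<subseteq> {x. lev j x = 1}"
      by (rule hull_minimal) (use levT VcV affine_lev in auto)
    ultimately show False using levw eps_pos by auto
  qed
  define V' where "V' = insert w (T ` V)"
  have injT: "inj T" unfolding T_def by (rule Tm_inj)
  have aiT: "\<not> affine_dependent (T ` V)" unfolding T_def by (rule Tm_indep[OF aiV])
  have aiV': "\<not> affine_dependent V'" unfolding V'_def by (rule affine_independent_insert[OF aiT wnotaff])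
  have wTV: "w \<notin> T ` V" using wnotT VcV by blast
  have cD: "card D \<ge> 1" using kD fD by (metis One_nat_def Suc_leI card_gt_0_iff empty_iff)
  have cV2: "card V \<ge> 2" using cV cD by simp
  have cardTV: "card (T ` V) = card V" using injT by (simp add: card_image inj_on_def inj_def)
  have cV': "card V' = card (insert j D) + 1"
    using wTV finV cardTV cV jD fD by (simp add: V'_def)
  have V'A: "V' \<subseteq> AD (insert j D)"
  proof
    fix x assume x: "x \<in> V'"
    show "x \<in> AD (insert j D)" unfolding AD_def
    proof (intro CollectI allI impI)
      fix l assume l: "l \<notin> insert j D"
      then have lk: "l \<noteq> k" "l \<noteq> j" "l \<notin> D" using kD by auto
      have lf: "lev l f = 0" using lk by (simp add: lev_f)
      have lb: "lev l (bv j) = 0" using lk by (simp add: lev_bv)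
      show "lev l x = 0"
      proof (cases "x = w")
        case True then show ?thesis by (simp add: w_def lev_wv lf lb)
      next
        case False
        then obtain v where v: "v \<in> V" "x = T v" using x by (auto simp: V'_def)
        have "lev l v = 0" using VA v(1) lk(3) by (auto simp: AD_def)
        then show ?thesis using v(2) by (simp add: T_def lev_Tm lf lb)
      qed
    qed
  qed
  have Tsub: "T ` (convex hull V) \<subseteq> convex hull V'"
    unfolding T_def Tm_hull[symmetric] V'_def by (rule hull_mono) auto
  have wV': "w \<in> convex hull V'" unfolding V'_def by (rule hull_inc) simp
  have idT: "y = u0 *\<^sub>R w + (1 - u0) *\<^sub>R T y" for y unfolding w_def T_def by (rule ident)
  have comb: "y \<in> convex hull V'" if "y \<in> convex hull V" for y
  proof -
    have "u0 *\<^sub>R w + (1 - u0) *\<^sub>R T y \<in> convex hull V'"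
      using u0 Tsub that wV' by (intro convexD[OF convex_convex_hull]) auto
    then show ?thesis using idT[of y] by simp
  qed
  have TVne: "T ` V \<noteq> {}" using cV2 by auto
  have RI: "rel_interior (convex hull V') =
     {u *\<^sub>R w + (1-u) *\<^sub>R T y | u y. 0 < u \<and> u < 1 \<and> y \<in> rel_interior (convex hull V)}"
  proof -
    have e1: "rel_interior (convex hull V') = {u *\<^sub>R w + (1-u) *\<^sub>R y' | u y'. 0 < u \<and> u < 1 \<and> y' \<in> rel_interior (convex hull (T ` V))}"
      unfolding V'_def by (rule rel_interior_pyramid[OF TVne])
    have e2: "rel_interior (convex hull (T ` V)) = T ` rel_interior (convex hull V)" unfolding T_def by (rule Tm_rel)
    show ?thesis unfolding e1 e2 by blast
  qed
  have fri': "f \<in> rel_interior (convex hull V')"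
    unfolding RI using u0 fri idT[of f] by blast
  have lf': "\<not> lattice_pt x" if "x \<in> rel_interior (convex hull V')" for x
  proof
    assume lx: "lattice_pt x"
    from that obtain u y where uy: "0 < u" "u < 1" "y \<in> rel_interior (convex hull V)" "x = u *\<^sub>R w + (1-u) *\<^sub>R T y"
      unfolding RI by blast
    have yc: "y \<in> convex hull V" using uy(3) rel_interior_subset by blast
    have lx': "lev j x = - u * eps + (1 - u)"
      using uy(4) levw levT[OF yc] by (simp add: lev_add lev_scale)
    have "lev j x \<in> \<int>" using lev_lattice[OF lx] .
    moreover have "-1 < lev j x" "lev j x < 1"
    proof -
      have "u * eps < eps" using uy eps_pos by simp
      then show "-1 < lev j x" using lx' uy eps_lt1 by linarith
      have "0 \<le> u * eps" using uy eps_pos by simp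
      then show "lev j x < 1" using lx' uy by linarith
    qed
    ultimately have "lev j x = 0" by (rule int_between)
    then have "u * (1 + eps) = 1" using lx' by (simp add: algebra_simps)
    then have "u = u0" using eps_pos by (simp add: u0_def field_simps)
    then have "x = y" using uy(4) idT[of y] by simp
    then show False using lfV uy(3) lx by blast
  qed
  obtain v1 where v1: "v1 \<in> V" using TVne by blast
  define y1 where "y1 = (1 - 1/K) *\<^sub>R f + (1/K) *\<^sub>R z v1"
  have K1: "0 < 1/K" "1/K < 1" using K_gt a1 by auto
  have y1ri: "y1 \<in> rel_interior (convex hull V)"
  proof (cases "z v1 = f")
    case True then show ?thesis using fri by (simp add: y1_def algebra_simps flip: scaleR_add_left)
  next
    case False
    have "y1 \<in> open_segment f (z v1)" unfolding in_segment(2) y1_def using False K1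
      by (intro conjI exI[of _ "1/K"]) auto
    moreover have "z v1 \<in> closure (convex hull V)" using zc[OF v1] closure_subset by blast
    ultimately show ?thesis using rel_interior_closure_convex_segment[OF convex_convex_hull fri] by blast
  qed
  define ztop where "ztop = z v1 + b"
  have ztopT: "ztop = T y1" unfolding ztop_def y1_def T_def b_def by (rule ztop_eq[symmetric])
  define z' where "z' x = (if x = w then ztop else z (Tinv j x))" for x
  have z'T: "z' (T v) = z v" if vV: "v \<in> V" for v
  proof -
    have "T v \<noteq> w" using wnotT VcV vV by auto
    then show ?thesis by (simp add: z'_def T_def Tinv_Tm)
  qed
  have z'w: "z' w = ztop" by (simp add: z'_def)
  have zfacet: "lattice_pt (z' x) \<and> z' x \<in> rel_interior (convex hull (V' - {x}))" if x: "x \<in> V'" for x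
  proof (cases "x = w")
    case True
    have "V' - {x} = T ` V" using True wTV by (auto simp: V'_def)
    moreover have "ztop \<in> T ` rel_interior (convex hull V)" using ztopT y1ri by blast
    ultimately have "z' x \<in> rel_interior (convex hull (V' - {x}))"
      using True z'w by (simp add: T_def Tm_rel)
    moreover have "lattice_pt (z' x)"
    proof -
      have "lattice_pt (z v1)" using zV v1 by blast
      then have "lattice_pt (z v1 + bv j)" using bv_lattice lattice_add by blast
      then show ?thesis using True z'w by (simp add: ztop_def b_def)
    qed
    ultimately show ?thesis by blast
  next
    case False
    then obtain v0 where v0: "v0 \<in> V" "x = T v0" using x by (auto simp: V'_def)
    have e: "V' - {x} = insert w (T ` (V - {v0}))"
      using v0 injT wTV by (auto simp: V'_def inj_def)
    have ne: "T ` (V - {v0}) \<noteq> {}"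
    proof -
      have "card (V - {v0}) \<ge> 1" using cV2 v0(1) finV by simp
      then show ?thesis by (metis card.empty image_is_empty not_one_le_zero)
    qed
    have "z v0 \<in> rel_interior (convex hull (V - {v0}))" using zV v0 by blast
    then have "z v0 \<in> rel_interior (convex hull (V' - {x}))"
    proof -
      assume zr: "z v0 \<in> rel_interior (convex hull (V - {v0}))"
      have e1: "rel_interior (convex hull (V' - {x})) = {u *\<^sub>R w + (1-u) *\<^sub>R y' | u y'. 0 < u \<and> u < 1 \<and> y' \<in> rel_interior (convex hull (T ` (V - {v0})))}"
        unfolding e by (rule rel_interior_pyramid[OF ne])
      have e2: "rel_interior (convex hull (T ` (V - {v0}))) = T ` rel_interior (convex hull (V - {v0}))"
        unfolding T_def by (rule Tm_rel)
      show ?thesis unfolding e1 e2 using u0 idT[of "z v0"] zr by blast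
    qed
    moreover have "z' x = z v0" using v0 z'T by simp
    ultimately show ?thesis using zV v0 by simp
  qed
  have mono: "shrink \<alpha> f (convex hull V) \<subseteq> shrink \<alpha> f (convex hull V')"
    unfolding shrink_def using comb by blast
  have segpt: "closed_segment (z v) ztop \<inter> shrink \<alpha> f (convex hull V') \<noteq> {}" if v: "v \<in> V" for v
  proof -
    define p where "p = (1 - 1/\<alpha>) *\<^sub>R z v + (1/\<alpha>) *\<^sub>R ztop"
    have "p \<in> closed_segment (z v) ztop" unfolding in_segment(1) p_def using a1
      by (intro exI[of _ "1/\<alpha>"]) auto
    moreover have "p \<in> shrink \<alpha> f (convex hull V')"
    proof -
      define m where "m = ((\<alpha> - 1)/\<alpha>) *\<^sub>R z v + (1/\<alpha>) *\<^sub>R z v1"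
      have mc: "m \<in> convex hull V" unfolding m_def
        using a1 zc[OF v] zc[OF v1] by (intro convexD[OF convex_convex_hull]) (auto simp: diff_divide_distrib)
      define th where "th = \<alpha> / K"
      have th: "0 \<le> th" "th \<le> 1" using a1 K_gt by (auto simp: th_def)
      define yy where "yy = (1 - th) *\<^sub>R f + th *\<^sub>R m"
      have yyc: "yy \<in> convex hull V" unfolding yy_def
        using th fc mc by (intro convexD[OF convex_convex_hull]) auto
      have "T yy \<in> convex hull V'" using Tsub yyc by blast
      moreover have "p = (1/\<alpha>) *\<^sub>R T yy + (1 - 1/\<alpha>) *\<^sub>R f"
        unfolding p_def ztop_def yy_def m_def th_def T_def b_def by (rule seg_alg)
      ultimately show ?thesis using shrink_mem by simp
    qed
    ultimately show ?thesis by blast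
  qed
  have seg': "closed_segment (z' x) (z' x') \<inter> shrink \<alpha> f (convex hull V') \<noteq> {}"
    if x: "x \<in> V'" and x': "x' \<in> V'" and xx: "x \<noteq> x'" for x x'
  proof (cases "x = w")
    case True
    then obtain v where v: "v \<in> V" "x' = T v" using x' xx by (auto simp: V'_def)
    then show ?thesis using True segpt[OF v(1)] z'T z'w by (simp add: closed_segment_commute)
  next
    case False
    then obtain v where v: "v \<in> V" "x = T v" using x by (auto simp: V'_def)
    show ?thesis
    proof (cases "x' = w")
      case True
      then show ?thesis using v segpt[OF v(1)] z'T z'w by simp
    next
      case False
      then obtain v' where v': "v' \<in> V" "x' = T v'" using x' by (auto simp: V'_def)
      have "v \<noteq> v'" using v v' xx by auto
      then have "closed_segment (z v) (z v') \<inter> shrink \<alpha> f (convex hull V) \<noteq> {}"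
        using segV v v' by blast
      then show ?thesis using mono v v' z'T by auto
    qed
  qed
  have "Inv (insert j D) V' z'" unfolding Inv_def
    using aiV' aff_independent_finite[OF aiV'] cV' V'A fri' lf' zfacet seg' by blast
  then show ?thesis by blast
qed

end



context constr begin

lemma Inv_all: "\<exists>V z. Inv UNIV V z"
proof -
  have "finite E \<Longrightarrow> k \<notin> E \<Longrightarrow> (\<exists>V z. Inv (insert k E) V z)" for E
  proof (induction E rule: finite_induct)
    case empty
    then show ?case using Inv_base by simp
  next
    case (insert x F)
    then have kx: "k \<noteq> x" "k \<notin> F" by auto
    then obtain V z where "Inv (insert k F) V z" using insert.IH by blast
    moreover have "x \<notin> insert k F" using kx insert.hyps by auto
    ultimately obtain V' z' where "Inv (insert x (insert k F)) V' z'"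
      using Inv_step[of "insert k F" V z x] insert.hyps by auto
    then show ?case by (metis insert_commute)
  qed
  from this[of "UNIV - {k}"] show ?thesis by (simp add: insert_absorb)
qed

lemma good_exists: "\<exists>L. good_simplex \<alpha> f L"
proof -
  obtain V z where I: "Inv UNIV V z" using Inv_all by blast
  have finV: "finite V" and aiV: "\<not> affine_dependent V" and cV: "card V = CARD('n) + 1"
    and fri: "f \<in> rel_interior (convex hull V)"
    and lfV: "\<forall>x \<in> rel_interior (convex hull V). \<not> lattice_pt x"
    and zV: "\<forall>v\<in>V. lattice_pt (z v) \<and> z v \<in> rel_interior (convex hull (V - {v}))"
    and segV: "\<forall>v\<in>V. \<forall>v'\<in>V. v \<noteq> v' \<longrightarrow> closed_segment (z v) (z v') \<inter> shrink \<alpha> f (convex hull V) \<noteq> {}"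
    using I by (simp_all add: Inv_def)
  define L where "L = convex hull V"
  have adV: "aff_dim V = int CARD('n)" using aff_dim_affine_independent[OF aiV] cV by simp
  have adL: "aff_dim L = int CARD('n)" using adV by (simp add: L_def aff_dim_convex_hull)
  have ri: "rel_interior L = interior L" using adL by (simp add: interior_rel_interior)
  have simp: "int CARD('n) simplex L" unfolding L_def
    using aiV cV by (intro simplex_convex_hull) simp
  have mlf: "max_lattice_free L" unfolding L_def
    using simplex_max_lattice_free[OF aiV cV] lfV zV ri unfolding L_def by blast
  have cV2: "2 \<le> card V" using cV by simp
  have facets: "{G. G facet_of L} = (\<lambda>v. convex hull (V - {v})) ` V"
    unfolding L_def by (rule facets_simplex[OF aiV cV2])
  have injF: "inj_on (\<lambda>v. convex hull (V - {v})) V" by (rule inj_facets_simplex[OF aiV])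
  have cardF: "card {G. G facet_of L} = CARD('n) + 1"
    unfolding facets using card_image[OF injF] cV by simp
  have LF: "L \<in> LF_poly (CARD('n) + 1)" unfolding LF_poly_def
  proof (intro CollectI conjI)
    show "lattice_free L" using mlf by (simp add: max_lattice_free_def)
    show "polyhedron L" unfolding L_def by (intro polytope_imp_polyhedron polytope_convex_hull finV)
    show "finite {F. F facet_of L}" unfolding facets using finV by simp
    show "card {F. F facet_of L} \<le> CARD('n) + 1" using cardF by simp
  qed
  have fint: "f \<in> interior L" using fri ri by (simp add: L_def)
  obtain \<sigma> where \<sigma>: "bij_betw \<sigma> {0..<card V} V" using ex_bij_betw_nat_finite[OF finV] by blast
  have rng: "{0..<card V} = {..CARD('n)}" using cV by auto
  have \<sigma>': "bij_betw \<sigma> {..CARD('n)} V" using \<sigma> rng by simp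
  define F where "F i = convex hull (V - {\<sigma> i})" for i
  have bF: "bij_betw F {..CARD('n)} {G. G facet_of L}"
  proof -
    have "bij_betw (\<lambda>v. convex hull (V - {v})) V {G. G facet_of L}"
      unfolding facets using injF by (rule bij_betw_imageI) simp
    then show ?thesis using bij_betw_trans[OF \<sigma>'] unfolding F_def comp_def by blast
  qed
  have \<sigma>V: "\<sigma> i \<in> V" if "i \<le> CARD('n)" for i using \<sigma>' that by (auto simp: bij_betw_def)
  have \<sigma>inj: "\<sigma> i \<noteq> \<sigma> j" if "i \<le> CARD('n)" "j \<le> CARD('n)" "i \<noteq> j" for i j
    using \<sigma>' that by (auto simp: bij_betw_def inj_on_def)
  have "good_simplex \<alpha> f L" unfolding good_simplex_def
  proof (intro conjI exI)
    show "int CARD('n) simplex L" by (rule simp)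
    show "max_lattice_free L" by (rule mlf)
    show "L \<in> LF_poly (CARD('n) + 1)" by (rule LF)
    show "f \<in> interior L" by (rule fint)
    show "bij_betw F {..CARD('n)} {G. G facet_of L}" by (rule bF)
    show "\<forall>i\<le>CARD('n). lattice_pt (z (\<sigma> i)) \<and> z (\<sigma> i) \<in> rel_interior (F i)"
      using zV \<sigma>V by (simp add: F_def)
    show "\<forall>i\<le>CARD('n). \<forall>j\<le>CARD('n). i \<noteq> j \<longrightarrow>
            closed_segment (z (\<sigma> i)) (z (\<sigma> j)) \<inter> shrink \<alpha> f L \<noteq> {}"
      using segV \<sigma>V \<sigma>inj by (simp add: L_def)
  qed
  then show ?thesis by blast
qed

end

theorem lemma6p3:
  fixes f :: "real^'n" and \<alpha> :: real
  assumes "\<forall>i. f $ i \<in> \<rat>" and "\<not> lattice_pt f" and "\<alpha> > 1"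
  shows "(\<exists>L. good_simplex \<alpha> f L) \<and>
         (\<forall>L. good_simplex \<alpha> f L \<longrightarrow>
            (\<forall>B \<in> LF_poly CARD('n). rho f B L \<ge> ereal \<alpha>))"
proof
  obtain U Ui k \<gamma> where n: "unimod U Ui" "U f = \<gamma> *\<^sub>R axis k 1" "\<gamma> \<notin> \<int>"
    using normal_form[OF assms(1,2)] by blast
  interpret constr U Ui f k \<gamma> \<alpha> using n assms(3) by unfold_locales
  show "\<exists>L. good_simplex \<alpha> f L" by (rule good_exists)
  show "\<forall>L. good_simplex \<alpha> f L \<longrightarrow> (\<forall>B \<in> LF_poly CARD('n). rho f B L \<ge> ereal \<alpha>)"
    using partB assms(3) by blast
qed


end
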